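(* Let $n\ge2$, $0\le m\le n(n-1)$ and $\kappa=\lfloor \frac{m}{n-1}\rfloor$. Then $\mathbb G(n,m)$ is the union of $\kappa$ simple $n$-vertex directed stars rooted at vertices $1,\dots,\kappa$ respectively, and the $n$-vertex simple directed forest consisting of an $(m-\kappa(n-1)+1)$-vertex directed star rooted at vertex $\kappa+1$ together with $n-(m-\kappa(n-1)+1)$ isolated vertices (when $m=\kappa(n-1)$ this forest has no arcs).
   Context: For integers $n\ge2$ and $0\le m\le n(n-1)$, $\mathbb G(n,m)$ is the simple directed graph on vertex set $\{1,\dots,n\}$ whose arc set is $\{(\lceil \frac{i}{n-1}\rceil,\ n-((i-1)\bmod n)) : i=1,\dots,m\}$, where an arc $(j,k)$ goes from $j$ to $k$ and $a\bmod b\in\{0,\dots,b-1\}$; these $m$ pairs are pairwise distinct pairs of distinct vertices. The $n$-vertex directed star rooted at $r$ has arcs $(r,j)$ for all $j\ne r$; a $k$-vertex directed star rooted at $r$ consists of $r$ and $k-1$ other vertices with arcs from $r$ to each of them. A union of graphs on the same vertex set has as arc set the union of their arc sets. *)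

theory Defs
  imports Complex_Main
begin

text \<open>Arc set of the digraph G(n,m) on vertex set {1..n}; an arc (j,k) goes from j to k.\<close>
definition Gnm_arcs :: "nat \<Rightarrow> nat \<Rightarrow> (nat \<times> nat) set" where
  "Gnm_arcs n m =
     {(nat \<lceil>real i / real (n - 1)\<rceil>, n - ((i - 1) mod n)) | i. 1 \<le> i \<and> i \<le> m}"

definition is_dir_star :: "nat \<Rightarrow> nat \<Rightarrow> nat \<Rightarrow> (nat \<times> nat) set \<Rightarrow> bool" where
  "is_dir_star n k r A \<longleftrightarrow>
     (\<exists>L. L \<subseteq> {1..n} - {r} \<and> card L = k - 1 \<and> A = {(r, j) | j. j \<in> L})"

end

theory Submission
  imports Defs
begin

definition hd' :: "nat \<Rightarrow> nat \<Rightarrow> nat \<Rightarrow> nat" where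
  "hd' n j t = n - (((j-1)*(n-1)+t-1) mod n)"

lemma ceil_div:
  assumes "i \<ge> 1" "d \<ge> 1"
  shows "nat \<lceil>real i / real d\<rceil> = (i-1) div d + 1"
proof -
  define q where "q = (i-1) div d"
  define r where "r = (i-1) mod d"
  have e: "i = d*q + r + 1" "r < d" using assms unfolding q_def r_def by auto
  have "\<lceil>real i / real d\<rceil> = int q + 1"
  proof (rule ceiling_unique)
    have "real d * real q < real i" using e by (simp flip: of_nat_mult)
    then show "real_of_int (int q + 1) - 1 < real i / real d" using assms by (simp add: field_simps)
    have "real i \<le> real d * (real q + 1)" using e by (simp add: algebra_simps flip: of_nat_mult)
    then show "real i / real d \<le> real_of_int (int q + 1)" using assms by (simp add: field_simps)
  qed
  then show ?thesis unfolding q_def by simp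
qed

lemma hd_mod:
  assumes "n \<ge> 2" "1 \<le> j" "1 \<le> t"
  shows "int (((j-1)*(n-1)+t-1) mod n) = (int t - int j) mod int n"
proof -
  obtain a where a: "j = Suc a" using assms(2) by (cases j) auto
  obtain b where b: "t = Suc b" using assms(3) by (cases t) auto
  obtain c where c: "n = Suc c" using assms(1) by (cases n) auto
  note abc = a b c
  have "int ((j-1)*(n-1)+t-1) = int n * (int j - 1) + (int t - int j)"
    unfolding abc by (simp add: algebra_simps)
  then have "int ((j-1)*(n-1)+t-1) mod int n = (int t - int j) mod int n"
    by (metis mod_mult_self3 mult.commute)
  then show ?thesis by (simp add: zmod_int)
qed

lemma hd_range:
  assumes "n \<ge> 2" "1 \<le> j" "j \<le> n" "1 \<le> t" "t < n"
  shows "hd' n j t \<in> {1..n} - {j}"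
proof -
  have m: "int (((j-1)*(n-1)+t-1) mod n) = (int t - int j) mod int n" using hd_mod assms by auto
  have lt: "((j-1)*(n-1)+t-1) mod n < n" using assms by auto
  have "hd' n j t \<noteq> j"
  proof
    assume "hd' n j t = j"
    then have "((j-1)*(n-1)+t-1) mod n = n - j" unfolding hd'_def using lt assms by linarith
    then have "(int t - int j) mod int n = int n - int j" using m assms by (simp add: of_nat_diff)
    moreover have "int t - int j = int n * ((int t - int j) div int n) + (int t - int j) mod int n"
      by simp
    ultimately have "int t = int n * ((int t - int j) div int n) + int n" by linarith
    then have "int t = int n * ((int t - int j) div int n + 1)" by (simp add: algebra_simps)
    then have "int n dvd int t" by (rule dvdI)
    then have "n dvd t" by simp
    then show False using assms by (auto dest: dvd_imp_le)
  qed
  moreover have "1 \<le> hd' n j t" "hd' n j t \<le> n" unfolding hd'_def using lt by linarith+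
  ultimately show ?thesis by auto
qed


lemma hd_inj:
  assumes "n \<ge> 2" "1 \<le> j" "j \<le> n"
  shows "inj_on (hd' n j) {1..n-1}"
proof (rule inj_onI)
  fix t1 t2 assume t1: "t1 \<in> {1..n-1}" and t2: "t2 \<in> {1..n-1}" and e: "hd' n j t1 = hd' n j t2"
  have l1: "((j-1)*(n-1)+t1-1) mod n < n" "((j-1)*(n-1)+t2-1) mod n < n" using assms by auto
  have "((j-1)*(n-1)+t1-1) mod n = ((j-1)*(n-1)+t2-1) mod n"
    using e l1 unfolding hd'_def by linarith
  then have "(int t1 - int j) mod int n = (int t2 - int j) mod int n"
    using hd_mod[of n j t1] hd_mod[of n j t2] assms t1 t2 by simp
  then have "(int t1 - int j + int j) mod int n = (int t2 - int j + int j) mod int n"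
    by (metis mod_add_left_eq)
  then have "int t1 mod int n = int t2 mod int n" by simp
  then have "t1 mod n = t2 mod n" by (metis of_nat_eq_iff zmod_int)
  moreover have "t1 mod n = t1" "t2 mod n = t2" using t1 t2 assms by auto
  ultimately show "t1 = t2" by simp
qed

lemma hd_image:
  assumes "n \<ge> 2" "1 \<le> j" "j \<le> n"
  shows "hd' n j ` {1..n-1} = {1..n} - {j}"
proof (rule card_subset_eq)
  show "finite ({1..n} - {j})" by simp
  show "hd' n j ` {1..n-1} \<subseteq> {1..n} - {j}" using hd_range assms by auto
  have "card (hd' n j ` {1..n-1}) = n - 1" using card_image[OF hd_inj[OF assms]] by simp
  moreover have "card ({1..n} - {j}) = n - 1" using assms by simp
  ultimately show "card (hd' n j ` {1..n-1}) = card ({1..n} - {j})" by simp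
qed

lemma Gnm_char:
  assumes "n \<ge> 2"
  shows "Gnm_arcs n m = {(q+1, hd' n (q+1) (s+1)) | q s. s < n-1 \<and> q*(n-1)+s < m}"
proof (intro set_eqI iffI)
  fix x assume "x \<in> Gnm_arcs n m"
  then obtain i where i: "1 \<le> i" "i \<le> m" and x: "x = (nat \<lceil>real i / real (n - 1)\<rceil>, n - ((i - 1) mod n))"
    unfolding Gnm_arcs_def by auto
  define q where "q = (i-1) div (n-1)"
  define s where "s = (i-1) mod (n-1)"
  have qs: "q*(n-1)+s = i-1" "s < n-1" unfolding q_def s_def using assms by (auto simp: div_mult_mod_eq)
  have cd: "nat \<lceil>real i / real (n - 1)\<rceil> = q+1" using ceil_div[OF i(1), of "n-1"] assms
    unfolding q_def by simp
  have "x = (q+1, hd' n (q+1) (s+1))"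
    unfolding x cd hd'_def using assms qs by simp
  then show "x \<in> {(q+1, hd' n (q+1) (s+1)) | q s. s < n-1 \<and> q*(n-1)+s < m}"
    using qs i by auto
next
  fix x assume "x \<in> {(q+1, hd' n (q+1) (s+1)) | q s. s < n-1 \<and> q*(n-1)+s < m}"
  then obtain q s where x: "x = (q+1, hd' n (q+1) (s+1))" and qs: "s < n-1" "q*(n-1)+s < m" by auto
  define i where "i = q*(n-1)+s+1"
  have i: "1 \<le> i" "i \<le> m" using qs unfolding i_def by auto
  have "(i-1) div (n-1) = q" unfolding i_def using qs by auto
  then have cd: "nat \<lceil>real i / real (n - 1)\<rceil> = q+1" using ceil_div[OF i(1), of "n-1"] assms
    by simp
  have "x = (nat \<lceil>real i / real (n - 1)\<rceil>, n - ((i - 1) mod n))"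
    unfolding x cd hd'_def using assms by (simp add: i_def)
  then show "x \<in> Gnm_arcs n m" unfolding Gnm_arcs_def using i by auto
qed


theorem proposition1:
  fixes n m :: nat
  assumes "n \<ge> 2" and "m \<le> n * (n - 1)"
  defines "\<kappa> \<equiv> nat \<lfloor>real m / real (n - 1)\<rfloor>"
  shows "\<exists>S F. (\<forall>r\<in>{1..\<kappa>}. is_dir_star n n r (S r))
             \<and> is_dir_star n (m - \<kappa> * (n - 1) + 1) (\<kappa> + 1) F
             \<and> Gnm_arcs n m = (\<Union>r\<in>{1..\<kappa>}. S r) \<union> F"
proof -
  define d where "d = n - 1"
  have d1: "d \<ge> 1" using assms(1) unfolding d_def by simp
  have kd: "\<kappa> = m div d"
    unfolding \<kappa>_def d_def using floor_divide_of_nat_eq[of m "n-1", where ?'a=real] by simp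
  define r where "r = m - \<kappa> * d"
  have kr: "\<kappa> * d + r = m" "r < d" unfolding r_def kd using d1
    by (simp_all add: minus_mod_eq_div_mult [symmetric])
  have kn: "\<kappa> \<le> n"
  proof (rule ccontr)
    assume "\<not> \<kappa> \<le> n"
    then have "(n+1) * d \<le> \<kappa> * d" by (intro mult_le_mono1) simp
    moreover have "m \<le> n * d" using assms(2) unfolding d_def .
    moreover have "(n+1)*d = n*d + d" by simp
    ultimately show False using kr d1 by linarith
  qed
  have kn2: "r > 0 \<Longrightarrow> \<kappa> < n"
  proof (rule ccontr)
    assume "r > 0" "\<not> \<kappa> < n"
    then have "\<kappa> = n" using kn by simp
    moreover have "m \<le> n * d" using assms(2) unfolding d_def .
    ultimately show False using kr \<open>r > 0\<close> by simp
  qed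
  define S where "S = (\<lambda>r::nat. {(r, x) | x. x \<in> {1..n} - {r}})"
  define F where "F = {(\<kappa>+1, hd' n (\<kappa>+1) (s+1)) | s. s < r}"
  have S: "\<forall>q\<in>{1..\<kappa>}. is_dir_star n n q (S q)"
  proof
    fix q assume "q \<in> {1..\<kappa>}"
    then show "is_dir_star n n q (S q)" unfolding is_dir_star_def S_def using kn
      by (intro exI[of _ "{1..n} - {q}"]) auto
  qed
  have F: "is_dir_star n (m - \<kappa> * (n - 1) + 1) (\<kappa> + 1) F"
  proof (cases "r = 0")
    case True
    then show ?thesis unfolding is_dir_star_def F_def using r_def d_def
      by (intro exI[of _ "{}"]) auto
  next
    case False
    let ?L = "hd' n (\<kappa>+1) ` {1..r}"
    have sub: "{1..r} \<subseteq> {1..n-1}" using kr unfolding d_def by auto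
    have "?L \<subseteq> {1..n} - {\<kappa>+1}" using image_mono[OF sub, of "hd' n (\<kappa>+1)"] hd_image[of n "\<kappa>+1"] kn2 False assms(1) by simp
    moreover have "card ?L = r"
      using card_image[OF inj_on_subset[OF hd_inj[of n "\<kappa>+1"] sub]] kn2 False assms(1) by simp
    moreover have "F = {(\<kappa>+1, j) | j. j \<in> ?L}" unfolding F_def
    proof (auto simp: image_iff)
      fix x assume "Suc 0 \<le> x" "x \<le> r"
      then show "\<exists>s. hd' n (Suc \<kappa>) x = hd' n (Suc \<kappa>) (Suc s) \<and> s < r"
        by (intro exI[of _ "x - 1"]) auto
    next
      fix s assume "s < r"
      then show "\<exists>x\<in>{Suc 0..r}. hd' n (Suc \<kappa>) (Suc s) = hd' n (Suc \<kappa>) x"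
        by (intro bexI[of _ "Suc s"]) auto
    qed
    ultimately show ?thesis unfolding is_dir_star_def r_def d_def by auto
  qed
  have G: "Gnm_arcs n m = (\<Union>r\<in>{1..\<kappa>}. S r) \<union> F"
  proof (intro set_eqI iffI)
    fix x assume "x \<in> Gnm_arcs n m"
    then obtain q s where x: "x = (q+1, hd' n (q+1) (s+1))" and qs: "s < d" "q*d+s < m"
      unfolding Gnm_char[OF assms(1)] d_def by auto
    consider "q < \<kappa>" | "q = \<kappa>" | "q > \<kappa>" by linarith
    then show "x \<in> (\<Union>r\<in>{1..\<kappa>}. S r) \<union> F"
    proof cases
      case 1
      have "hd' n (q+1) (s+1) \<in> {1..n} - {q+1}" using hd_range[of n "q+1" "s+1"] 1 kn assms(1) qs
        unfolding d_def by auto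
      then show ?thesis using 1 unfolding x S_def by auto
    next
      case 2
      then show ?thesis using qs kr unfolding x F_def by auto
    next
      case 3
      then have "(\<kappa>+1)*d \<le> q*d" by (intro mult_le_mono1) simp
      moreover have "(\<kappa>+1)*d = \<kappa>*d + d" by simp
      ultimately show ?thesis using qs kr by linarith
    qed
  next
    fix x assume "x \<in> (\<Union>r\<in>{1..\<kappa>}. S r) \<union> F"
    then consider (a) q y where "q \<in> {1..\<kappa>}" "y \<in> {1..n} - {q}" "x = (q, y)" | (b) "x \<in> F"
      unfolding S_def by auto
    then show "x \<in> Gnm_arcs n m"
    proof cases
      case a
      then obtain t where t: "t \<in> {1..n-1}" "y = hd' n q t" using hd_image[of n q] kn assms(1)
        by (metis atLeastAtMost_iff imageE le_trans)
      have "t - 1 < d" using t unfolding d_def by auto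
      moreover obtain p where "q = Suc p" using a(1) by (cases q) auto
      ultimately have "(q-1)*d + (t-1) < q * d" by simp
      also have "q*d \<le> \<kappa>*d" using a(1) by simp
      finally have "(q-1)*d + (t-1) < m" using kr by linarith
      then show ?thesis unfolding Gnm_char[OF assms(1)] using a t unfolding d_def
        by (intro CollectI exI[of _ "q-1"] exI[of _ "t-1"]) auto
    next
      case b
      then obtain s where "x = (\<kappa>+1, hd' n (\<kappa>+1) (s+1))" "s < r" unfolding F_def by auto
      then show ?thesis unfolding Gnm_char[OF assms(1)] using kr unfolding d_def by auto
    qed
  qed
  show ?thesis using S F G by blast
qed

end
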